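(* Let $X_1,X_2,\ldots$ be i.i.d. with density $g(x;\Psi_0,\sigma_0)$, where $\Psi_0\in\boldsymbol{\Psi}_m$, $\sigma_0>0$, and assume $f(\cdot;0,1)$ satisfies Conditions C3 and C4. Let $a=(1+\beta)/(2\beta)$, $b=2(\beta+1)/(\beta-1)$ and $\epsilon_0=(3mbv_0/\sigma_0)^{-1/(1-a)}$. Then, with probability one, there exists $n_0$ such that for all $n\ge n_0$, $$\sup_{\mu\in\mathbb{R}}\sum_{i=1}^n I\big(|X_i-\mu|<\epsilon_0^{1-a}\big)\le \frac{n}{mb}.$$
   Context: Fix a positive integer $m$. Let $f(x;0,1)$ be a probability density on $\mathbb{R}$, $f(x;\mu,\sigma)=\sigma^{-1}f((x-\mu)/\sigma;0,1)$, $\boldsymbol{\Psi}_m=\{\sum_{j=1}^m\alpha_j I(\mu_j\le\mu):\alpha_j\ge0,\sum_j\alpha_j=1,\mu_j\in\mathbb{R}\}$, and $g(x;\Psi,\sigma)=\sum_{j=1}^m\alpha_j f(x;\mu_j,\sigma)$. (C3) There exist $v_0,v_1>0$ and $\beta>1$ such that $f(x;0,1)\le\min\{v_0,v_1|x|^{-\beta}\}$ for all $x$. (C4) $f(x;0,1)$ is continuous in $x$. The constants $v_0,\beta$ in the claim are those of C3; note $0<a<1$. *)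

theory Defs
  imports "HOL-Probability.Probability"
begin

definition locscale :: "(real \<Rightarrow> real) \<Rightarrow> real \<Rightarrow> real \<Rightarrow> real \<Rightarrow> real" where
  "locscale f0 x \<mu> \<sigma> = f0 ((x - \<mu>) / \<sigma>) / \<sigma>"

text \<open>Finite mixture g(x;Psi,sigma) = sum_{j=1}^m alpha_j f(x;mu_j,sigma), where the mixing
  distribution Psi = sum_j alpha_j I(mu_j <= mu) is given by weights alpha and support points mu.\<close>
definition mixdens :: "(real \<Rightarrow> real) \<Rightarrow> nat \<Rightarrow> (nat \<Rightarrow> real) \<Rightarrow> (nat \<Rightarrow> real) \<Rightarrow> real \<Rightarrow> real \<Rightarrow> real" where
  "mixdens f0 m \<alpha> \<mu> \<sigma> x = (\<Sum>j=1..m. \<alpha> j * locscale f0 x (\<mu> j) \<sigma>)"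

definition in_Psi_m :: "nat \<Rightarrow> (nat \<Rightarrow> real) \<Rightarrow> bool" where
  "in_Psi_m m \<alpha> \<longleftrightarrow> (\<forall>j\<in>{1..m}. \<alpha> j \<ge> 0) \<and> (\<Sum>j=1..m. \<alpha> j) = 1"

end

theory Submission imports Defs begin

lemma count_bound:
  fixes M :: "'s measure" and X :: "nat \<Rightarrow> 's \<Rightarrow> real"
  assumes P: "prob_space M"
    and ind: "prob_space.indep_vars M (\<lambda>_. borel) X UNIV"
    and S: "S \<in> sets borel" and t: "t > 0"
    and pb: "\<And>i. measure M (X i -` S \<inter> space M) \<le> p"
  shows "AE \<omega> in M. eventually (\<lambda>n. real (card {i\<in>{1..n}. X i \<omega> \<in> S}) \<le> real n * (p + t)) sequentially"
proof -
  interpret prob_space M by (rule P)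
  have rv[measurable]: "X i \<in> borel_measurable M" for i
    using ind unfolding indep_vars_def by auto
  define Z where "Z i \<omega> = (indicator S (X i \<omega>) :: real)" for i \<omega>
  have Zm[measurable]: "Z i \<in> borel_measurable M" for i
    unfolding Z_def using S by measurable
  have indZ: "indep_vars (\<lambda>_. borel) Z UNIV"
    unfolding Z_def by (rule indep_vars_compose2[OF ind]) (use S in auto)
  have EZ: "expectation (Z i) = measure M (X i -` S \<inter> space M)" for i
  proof -
    have "expectation (Z i) = expectation (indicator (X i -` S \<inter> space M))"
      by (rule Bochner_Integration.integral_cong) (auto simp: Z_def indicator_def)
    also have "\<dots> = measure M (X i -` S \<inter> space M)"
      by (simp add: Int_assoc)
    finally show ?thesis .
  qed
  define A where "A n = {\<omega>\<in>space M. (\<Sum>i\<in>{1..n}. Z i \<omega>) \<ge> (\<Sum>i\<in>{1..n}. expectation (Z i)) + real n * t}" for n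
  have Am[measurable]: "A n \<in> sets M" for n
    unfolding A_def by measurable
  have bnd: "measure M (A n) \<le> exp (-2 * t\<^sup>2) ^ n" for n
  proof (cases "n = 0")
    case True then show ?thesis by simp
  next
    case False
    interpret H: Hoeffding_ineq M "{1..n}" Z "\<lambda>_. 0" "\<lambda>_. 1" "(\<Sum>i\<in>{1..n}. expectation (Z i))"
      by unfold_locales (auto intro: indep_vars_subset[OF indZ] simp: Z_def indicator_def)
    have "measure M (A n) \<le> exp (-2 * (real n * t)\<^sup>2 / (\<Sum>i\<in>{1..n}. ((1::real) - 0)\<^sup>2))"
      unfolding A_def using H.Hoeffding_ineq_ge[of "real n * t"] False t by simp
    also have "\<dots> = exp (real n * (-2 * t\<^sup>2))"
      using False by (simp add: power2_eq_square field_simps)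
    also have "\<dots> = exp (-2 * t\<^sup>2) ^ n" by (rule exp_of_nat_mult)
    finally show ?thesis .
  qed
  have "summable (\<lambda>n. exp (-2 * t\<^sup>2) ^ n)"
    by (rule summable_geometric) (use t in simp)
  then have sA: "summable (\<lambda>n. measure M (A n))"
    by (rule summable_comparison_test'[where N=0]) (use bnd in simp)
  have "AE \<omega> in M. eventually (\<lambda>n. \<omega> \<in> space M - A n) sequentially"
    by (rule borel_cantelli_AE1) (use sA in \<open>auto simp: emeasure_eq_measure\<close>)
  then show ?thesis
  proof (rule AE_mp, intro AE_I2 impI)
    fix \<omega> assume \<omega>: "\<omega> \<in> space M" and ev: "eventually (\<lambda>n. \<omega> \<in> space M - A n) sequentially"
    show "eventually (\<lambda>n. real (card {i\<in>{1..n}. X i \<omega> \<in> S}) \<le> real n * (p + t)) sequentially"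
      using ev
    proof (rule eventually_mono)
      fix n assume "\<omega> \<in> space M - A n"
      then have lt: "(\<Sum>i\<in>{1..n}. Z i \<omega>) < (\<Sum>i\<in>{1..n}. expectation (Z i)) + real n * t"
        using \<omega> by (auto simp: A_def)
      have c: "real (card {i\<in>{1..n}. X i \<omega> \<in> S}) = (\<Sum>i\<in>{1..n}. Z i \<omega>)"
        unfolding Z_def indicator_def by (simp add: sum.If_cases Int_def conj_commute)
      have "(\<Sum>i\<in>{1..n}. expectation (Z i)) \<le> (\<Sum>i\<in>{1..n}. p)"
        by (rule sum_mono) (simp add: EZ pb)
      then show "real (card {i\<in>{1..n}. X i \<omega> \<in> S}) \<le> real n * (p + t)"
        using lt c by (simp add: algebra_simps)
    qed
  qed
qed
theorem lemma1:
  fixes M :: "'s measure" and X :: "nat \<Rightarrow> 's \<Rightarrow> real"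
    and f0 :: "real \<Rightarrow> real" and m :: nat
    and \<alpha>0 \<mu>0 :: "nat \<Rightarrow> real" and \<sigma>0 :: real
    and v0 v1 \<beta> :: real
  assumes "prob_space M"
    and "m \<ge> 1"
    \<comment> \<open>f(.;0,1) is a probability density\<close>
    and "\<forall>x. f0 x \<ge> 0"
    and "has_bochner_integral lborel f0 1"
    \<comment> \<open>Condition C3 (|x|^{-beta} read as +infinity at x = 0)\<close>
    and "v0 > 0" and "v1 > 0" and "\<beta> > 1"
    and "\<forall>x. f0 x \<le> v0 \<and> (x \<noteq> 0 \<longrightarrow> f0 x \<le> v1 * \<bar>x\<bar> powr (-\<beta>))"
    \<comment> \<open>Condition C4\<close>
    and "continuous_on UNIV f0"
    \<comment> \<open>true parameters\<close>
    and "in_Psi_m m \<alpha>0" and "\<sigma>0 > 0"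
    \<comment> \<open>X_1, X_2, ... i.i.d. with density g(x;Psi_0,sigma_0)\<close>
    and "prob_space.indep_vars M (\<lambda>_. borel) X UNIV"
    and "\<forall>i. distributed M lborel (X i) (\<lambda>x. ennreal (mixdens f0 m \<alpha>0 \<mu>0 \<sigma>0 x))"
  shows "let a = (1 + \<beta>) / (2 * \<beta>);
             b = 2 * (\<beta> + 1) / (\<beta> - 1);
             \<epsilon>0 = (3 * real m * b * v0 / \<sigma>0) powr (- 1 / (1 - a))
         in AE \<omega> in M. \<exists>n0. \<forall>n\<ge>n0.
              (SUP \<mu>. real (card {i\<in>{1..n}. \<bar>X i \<omega> - \<mu>\<bar> < \<epsilon>0 powr (1 - a)}))
                \<le> real n / (real m * b)"
proof -
  interpret prob_space M by (rule assms(1))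
  have m1: "m \<ge> 1" and f0nn: "\<And>x. f0 x \<ge> 0" and v0: "v0 > 0" and beta: "\<beta> > 1"
    and C3: "\<And>x. f0 x \<le> v0" and psi: "in_Psi_m m \<alpha>0" and s0: "\<sigma>0 > 0"
    and ind: "indep_vars (\<lambda>_. borel) X UNIV"
    using assms by auto
  define g where "g = mixdens f0 m \<alpha>0 \<mu>0 \<sigma>0"
  define q where "q = v0 / \<sigma>0"
  have dist: "distributed M lborel (X i) (\<lambda>x. ennreal (g x))" for i
    using assms(13) unfolding g_def by auto
  have rv[measurable]: "X i \<in> borel_measurable M" for i
    using ind unfolding indep_vars_def by auto
  have gle: "g x \<le> q" for x
  proof -
    have "g x = (\<Sum>j=1..m. \<alpha>0 j * locscale f0 x (\<mu>0 j) \<sigma>0)" by (simp add: g_def mixdens_def)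
    also have "\<dots> \<le> (\<Sum>j=1..m. \<alpha>0 j * q)"
    proof (rule sum_mono)
      fix j assume j: "j \<in> {1..m}"
      have "locscale f0 x (\<mu>0 j) \<sigma>0 \<le> q"
        unfolding locscale_def q_def using C3 s0 by (simp add: divide_right_mono)
      then show "\<alpha>0 j * locscale f0 x (\<mu>0 j) \<sigma>0 \<le> \<alpha>0 j * q"
        using psi j unfolding in_Psi_m_def by (simp add: mult_left_mono)
    qed
    also have "\<dots> = q" using psi unfolding in_Psi_m_def by (simp add: sum_distrib_right[symmetric])
    finally show ?thesis .
  qed
  define Pr where "Pr S = measure M (X 0 -` S \<inter> space M)" for S
  have Peq: "measure M (X i -` S \<inter> space M) = Pr S" if S: "S \<in> sets borel" for i S
  proof -
    have S': "S \<in> sets lborel" using S by simp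
    show ?thesis unfolding Pr_def measure_def distributed_emeasure[OF dist S'] by simp
  qed
  have Pint: "Pr {u..v} \<le> q * (v - u)" if uv: "u \<le> v" for u v
  proof -
    have "emeasure M (X 0 -` {u..v} \<inter> space M) = (\<integral>\<^sup>+x. ennreal (g x) * indicator {u..v} x \<partial>lborel)"
      by (rule distributed_emeasure[OF dist]) simp
    also have "\<dots> \<le> (\<integral>\<^sup>+x. ennreal q * indicator {u..v} x \<partial>lborel)"
      by (rule nn_integral_mono) (auto simp: indicator_def gle intro: ennreal_leI)
    also have "\<dots> = ennreal q * emeasure lborel {u..v}"
      by (rule nn_integral_cmult_indicator) simp
    also have "\<dots> = ennreal (q * (v - u))"
      using uv v0 s0 by (simp add: q_def ennreal_mult[symmetric])
    finally have "ennreal (Pr {u..v}) \<le> ennreal (q * (v - u))"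
      unfolding Pr_def by (simp add: emeasure_eq_measure)
    moreover have "q * (v - u) \<ge> 0" using uv v0 s0 by (simp add: q_def)
    ultimately show ?thesis by (simp add: ennreal_le_iff)
  qed
  define b where "b = 2 * (\<beta> + 1) / (\<beta> - 1)"
  define a where "a = (1 + \<beta>) / (2 * \<beta>)"
  define B where "B = 3 * real m * b * v0 / \<sigma>0"
  have bpos: "b > 0" using beta by (simp add: b_def)
  have a1: "1 - a > 0" using beta by (simp add: a_def field_simps)
  have Bpos: "B > 0" using bpos m1 v0 s0 by (simp add: B_def)
  define \<delta> where "\<delta> = 1 / B"
  have e: "(B powr (- 1 / (1 - a))) powr (1 - a) = \<delta>"
  proof -
    have "(B powr (- 1 / (1 - a))) powr (1 - a) = B powr ((- 1 / (1 - a)) * (1 - a))"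
      by (rule powr_powr)
    also have "(- 1 / (1 - a)) * (1 - a) = - 1" using a1 by simp
    also have "B powr (- 1) = 1 / B" using Bpos by (simp add: powr_minus_divide)
    finally show ?thesis by (simp add: \<delta>_def)
  qed
  define c where "c = 1 / (real m * b)"
  have cpos: "c > 0" using bpos m1 by (simp add: c_def)
  have dpos: "\<delta> > 0" using Bpos by (simp add: \<delta>_def)
  have dq: "\<delta> * q = c / 3"
    using bpos m1 v0 s0 by (simp add: \<delta>_def B_def q_def c_def field_simps)
  define h where "h = \<delta> / 2"
  have hpos: "h > 0" using dpos by (simp add: h_def)
  define J where "J k = {real_of_int k * h - \<delta> .. real_of_int k * h + h + \<delta>}" for k :: int
  have Jb: "J k \<in> sets borel" for k by (simp add: J_def)
  have PJ: "Pr (J k) \<le> 5 * c / 6" for k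
  proof -
    have "Pr (J k) \<le> q * ((real_of_int k * h + h + \<delta>) - (real_of_int k * h - \<delta>))"
      unfolding J_def by (rule Pint) (use hpos dpos in simp)
    also have "\<dots> = 5 * c / 6" using dq by (simp add: h_def algebra_simps)
    finally show ?thesis .
  qed
  define T where "T r = {x::real. r < \<bar>x\<bar>}" for r
  have Tb[measurable]: "T r \<in> sets borel" for r unfolding T_def by measurable
  obtain R where PT: "Pr (T R) < c / 2"
  proof -
    define D where "D n = X 0 -` T (real n) \<inter> space M" for n :: nat
    have "(\<lambda>n. measure M (D n)) \<longlonglongrightarrow> measure M (\<Inter>n. D n)"
    proof (rule Lim_measure_decseq)
      show "range D \<subseteq> sets M" unfolding D_def by auto
      show "decseq D" unfolding decseq_def D_def T_def by auto
    qed auto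
    moreover have "(\<Inter>n. D n) = {}"
    proof safe
      fix \<omega> assume "\<omega> \<in> (\<Inter>n. D n)"
      moreover obtain n :: nat where "\<bar>X 0 \<omega>\<bar> < real n" using reals_Archimedean2 by blast
      ultimately show "\<omega> \<in> {}" by (auto simp: D_def T_def dest!: spec[of _ n])
    qed
    ultimately have "(\<lambda>n. measure M (D n)) \<longlonglongrightarrow> 0" by simp
    then have "eventually (\<lambda>n. measure M (D n) < c / 2) sequentially"
      using cpos by (intro order_tendstoD(2)) auto
    then obtain n where "measure M (D n) < c / 2" by (auto simp: eventually_sequentially)
    then show ?thesis using that[of "real n"] by (simp add: D_def Pr_def)
  qed
  define t where "t = c / 12"
  have tpos: "t > 0" using cpos by (simp add: t_def)
  define K0 where "K0 = \<lceil>(R + \<delta>) / h\<rceil>"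
  define Ks where "Ks = {-K0..K0}"
  have AEJ: "AE \<omega> in M. \<forall>k\<in>Ks. eventually (\<lambda>n. real (card {i\<in>{1..n}. X i \<omega> \<in> J k}) \<le> real n * (5 * c / 6 + t)) sequentially"
  proof (rule AE_finite_allI)
    show "finite Ks" by (simp add: Ks_def)
    fix k
    show "AE \<omega> in M. eventually (\<lambda>n. real (card {i\<in>{1..n}. X i \<omega> \<in> J k}) \<le> real n * (5 * c / 6 + t)) sequentially"
      by (rule count_bound[OF assms(1) ind _ tpos]) (simp add: J_def, simp only: Peq[OF Jb] PJ)
  qed
  have AET: "AE \<omega> in M. eventually (\<lambda>n. real (card {i\<in>{1..n}. X i \<omega> \<in> T R}) \<le> real n * (c / 2 + t)) sequentially"
    by (rule count_bound[OF assms(1) ind _ tpos]) (use PT in \<open>auto simp: Peq\<close>)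
  have main: "AE \<omega> in M. \<exists>n0. \<forall>n\<ge>n0. (SUP \<mu>. real (card {i\<in>{1..n}. \<bar>X i \<omega> - \<mu>\<bar> < \<delta>})) \<le> real n / (real m * b)"
    using AEJ AET
  proof (eventually_elim)
    case (elim \<omega>)
    have "eventually (\<lambda>n. (\<forall>k\<in>Ks. real (card {i\<in>{1..n}. X i \<omega> \<in> J k}) \<le> real n * (5 * c / 6 + t))
       \<and> real (card {i\<in>{1..n}. X i \<omega> \<in> T R}) \<le> real n * (c / 2 + t)) sequentially"
      using elim by (intro eventually_conj eventually_ball_finite) (auto simp: Ks_def)
    then obtain n0 where n0: "\<And>n. n \<ge> n0 \<Longrightarrow> (\<forall>k\<in>Ks. real (card {i\<in>{1..n}. X i \<omega> \<in> J k}) \<le> real n * (5 * c / 6 + t))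
       \<and> real (card {i\<in>{1..n}. X i \<omega> \<in> T R}) \<le> real n * (c / 2 + t)"
      by (auto simp: eventually_sequentially)
    show ?case
    proof (intro exI allI impI)
      fix n assume n: "n \<ge> n0"
      have nc: "real n / (real m * b) = real n * c" by (simp add: c_def)
      show "(SUP \<mu>. real (card {i\<in>{1..n}. \<bar>X i \<omega> - \<mu>\<bar> < \<delta>})) \<le> real n / (real m * b)"
        unfolding nc
      proof (rule cSUP_least)
        fix \<mu>
        let ?C = "{i\<in>{1..n}. \<bar>X i \<omega> - \<mu>\<bar> < \<delta>}"
        show "real (card ?C) \<le> real n * c"
        proof (cases "\<bar>\<mu>\<bar> \<ge> R + \<delta>")
          case True
          have "?C \<subseteq> {i\<in>{1..n}. X i \<omega> \<in> T R}" using True by (auto simp: T_def)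
          then have "card ?C \<le> card {i\<in>{1..n}. X i \<omega> \<in> T R}" by (intro card_mono) auto
          then have "real (card ?C) \<le> real n * (c / 2 + t)" using n0[OF n] by linarith
          also have "\<dots> \<le> real n * c" using cpos by (intro mult_left_mono) (auto simp: t_def)
          finally show ?thesis .
        next
          case False
          define k where "k = \<lfloor>\<mu> / h\<rfloor>"
          have k1: "real_of_int k * h \<le> \<mu>"
            using hpos unfolding k_def by (metis floor_divide_lower)
          have k2: "\<mu> < real_of_int k * h + h"
          proof -
            have "\<mu> / h < real_of_int k + 1" unfolding k_def by linarith
            then show ?thesis using hpos by (simp add: divide_less_eq algebra_simps)
          qed
          have "k \<in> Ks"
          proof -
            have "real_of_int k \<le> (R + \<delta>) / h"
              using k1 False hpos by (simp add: field_simps)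
            then have "k \<le> K0" unfolding K0_def by linarith
            moreover have "- ((R + \<delta>) / h) - 1 < real_of_int k"
              using k2 False hpos by (simp add: field_simps)
            then have "- K0 \<le> k" unfolding K0_def by linarith
            ultimately show ?thesis by (simp add: Ks_def)
          qed
          have "?C \<subseteq> {i\<in>{1..n}. X i \<omega> \<in> J k}" using k1 k2 by (auto simp: J_def)
          then have "card ?C \<le> card {i\<in>{1..n}. X i \<omega> \<in> J k}" by (intro card_mono) auto
          then have "real (card ?C) \<le> real n * (5 * c / 6 + t)" using n0[OF n] \<open>k \<in> Ks\<close> by fastforce
          also have "\<dots> \<le> real n * c" using cpos by (intro mult_left_mono) (auto simp: t_def)
          finally show ?thesis .
        qed
      qed simp
    qed
  qed
  show ?thesis
    unfolding Let_def a_def[symmetric] b_def[symmetric] B_def[symmetric] e using main .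
qed

end
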